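(* Let $M$ be a graded generalized Eulerian $A_n(K)$-module which is finitely generated as an $R$-module. Then either $M=0$ or $M\cong R^m$ (as graded $R$-modules, with all free generators in degree $0$) for some $m\ge1$.
   Context: $K$ is a field of characteristic zero, $R=K[X_1,\dots,X_n]$ standard graded, $A_n(K)$ the Weyl algebra graded by $\deg X_i=1$, $\deg\partial_i=-1$; $\mathcal E_n=\sum_iX_i\partial_i$; $|z|$ is the degree of homogeneous $z$. A graded left $A_n(K)$-module $M$ is generalized Eulerian if for every homogeneous $z\in M$ there is $a\ge1$ with $(\mathcal E_n-|z|)^az=0$. *)

theory Defs
  imports Complex_Main "HOL-Library.Poly_Mapping"
begin

text \<open>The polynomial ring R = K[X_0,...,X_(n-1)]: polynomials are finitely supported
  maps from monomials (exponent vectors, nat =>0 nat) to coefficients, using only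
  variables with index < n.\<close>

definition polyR :: "nat \<Rightarrow> ((nat \<Rightarrow>\<^sub>0 nat) \<Rightarrow>\<^sub>0 'k::field) set" where
  "polyR n = {p. \<forall>\<alpha>\<in>Poly_Mapping.keys p. \<forall>i\<in>Poly_Mapping.keys \<alpha>. i < n}"

definition Xmon :: "nat \<Rightarrow> (nat \<Rightarrow> 'm \<Rightarrow> 'm) \<Rightarrow> (nat \<Rightarrow>\<^sub>0 nat) \<Rightarrow> 'm \<Rightarrow> 'm" where
  "Xmon n X \<alpha> = fold (\<lambda>i f. (X i ^^ Poly_Mapping.lookup \<alpha> i) \<circ> f) [0..<n] id"

definition pact :: "nat \<Rightarrow> ('k::field \<Rightarrow> 'm \<Rightarrow> 'm) \<Rightarrow> (nat \<Rightarrow> 'm \<Rightarrow> 'm)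
    \<Rightarrow> ((nat \<Rightarrow>\<^sub>0 nat) \<Rightarrow>\<^sub>0 'k) \<Rightarrow> 'm \<Rightarrow> 'm::ab_group_add" where
  "pact n smul X p v = (\<Sum>\<alpha>\<in>Poly_Mapping.keys p. smul (Poly_Mapping.lookup p \<alpha>) (Xmon n X \<alpha> v))"

definition weyl_module :: "nat \<Rightarrow> ('k::field \<Rightarrow> 'm \<Rightarrow> 'm::ab_group_add)
    \<Rightarrow> (nat \<Rightarrow> 'm \<Rightarrow> 'm) \<Rightarrow> (nat \<Rightarrow> 'm \<Rightarrow> 'm) \<Rightarrow> bool" where
  "weyl_module n smul X D \<longleftrightarrow>
     Vector_Spaces.vector_space smul \<and>
     (\<forall>i<n. Vector_Spaces.linear smul smul (X i) \<and> Vector_Spaces.linear smul smul (D i)) \<and>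
     (\<forall>i<n. \<forall>j<n. \<forall>v. X i (X j v) = X j (X i v)) \<and>
     (\<forall>i<n. \<forall>j<n. \<forall>v. D i (D j v) = D j (D i v)) \<and>
     (\<forall>i<n. \<forall>j<n. \<forall>v. D i (X j v) - X j (D i v) = (if i = j then v else 0))"

definition graded_weyl_module :: "nat \<Rightarrow> ('k::field \<Rightarrow> 'm \<Rightarrow> 'm::ab_group_add)
    \<Rightarrow> (nat \<Rightarrow> 'm \<Rightarrow> 'm) \<Rightarrow> (nat \<Rightarrow> 'm \<Rightarrow> 'm) \<Rightarrow> (int \<Rightarrow> 'm set) \<Rightarrow> bool" where
  "graded_weyl_module n smul X D Md \<longleftrightarrow>
     weyl_module n smul X D \<and>
     (\<forall>d. Modules.module.subspace smul (Md d)) \<and>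
     (\<forall>v. \<exists>!c :: int \<Rightarrow> 'm. finite {d. c d \<noteq> 0} \<and> (\<forall>d. c d \<in> Md d) \<and>
            v = (\<Sum>d\<in>{d. c d \<noteq> 0}. c d)) \<and>
     (\<forall>i<n. \<forall>d. \<forall>v\<in>Md d. X i v \<in> Md (d + 1)) \<and>
     (\<forall>i<n. \<forall>d. \<forall>v\<in>Md d. D i v \<in> Md (d - 1))"

definition euler_op :: "nat \<Rightarrow> (nat \<Rightarrow> 'm \<Rightarrow> 'm) \<Rightarrow> (nat \<Rightarrow> 'm \<Rightarrow> 'm) \<Rightarrow> 'm \<Rightarrow> 'm::ab_group_add" where
  "euler_op n X D v = (\<Sum>i<n. X i (D i v))"

definition generalized_eulerian :: "nat \<Rightarrow> ('k::field_char_0 \<Rightarrow> 'm \<Rightarrow> 'm::ab_group_add)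
    \<Rightarrow> (nat \<Rightarrow> 'm \<Rightarrow> 'm) \<Rightarrow> (nat \<Rightarrow> 'm \<Rightarrow> 'm) \<Rightarrow> (int \<Rightarrow> 'm set) \<Rightarrow> bool" where
  "generalized_eulerian n smul X D Md \<longleftrightarrow>
     (\<forall>d. \<forall>z\<in>Md d. \<exists>a::nat. a \<ge> 1 \<and>
        ((\<lambda>v. euler_op n X D v - smul (of_int d) v) ^^ a) z = 0)"

definition fin_gen_R :: "nat \<Rightarrow> ('k::field \<Rightarrow> 'm \<Rightarrow> 'm::ab_group_add) \<Rightarrow> (nat \<Rightarrow> 'm \<Rightarrow> 'm) \<Rightarrow> bool" where
  "fin_gen_R n smul X \<longleftrightarrow>
     (\<exists>G. finite G \<and> (\<forall>v. \<exists>c. (\<forall>g\<in>G. c g \<in> polyR n) \<and> v = (\<Sum>g\<in>G. pact n smul X (c g) g)))"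

text \<open>M is isomorphic, as a graded R-module, to R^m with all free generators in degree 0:
  there are e_0..e_(m-1) in M_0 such that (p_j) |-> sum_j p_j e_j is a bijection R^m -> M.
  (This map is R-linear and sends the standard basis to degree-0 elements, so it is a graded
  R-module isomorphism.)\<close>
definition free_deg0 :: "nat \<Rightarrow> ('k::field \<Rightarrow> 'm \<Rightarrow> 'm::ab_group_add) \<Rightarrow> (nat \<Rightarrow> 'm \<Rightarrow> 'm)
    \<Rightarrow> (int \<Rightarrow> 'm set) \<Rightarrow> nat \<Rightarrow> bool" where
  "free_deg0 n smul X Md m \<longleftrightarrow>
     (\<exists>e :: nat \<Rightarrow> 'm. (\<forall>j<m. e j \<in> Md 0) \<and>
        bij_betw (\<lambda>ps. \<Sum>j<m. pact n smul X (ps j) (e j))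
          {ps. \<forall>j. (j < m \<longrightarrow> ps j \<in> polyR n) \<and> (m \<le> j \<longrightarrow> ps j = 0)} UNIV)"

end

theory Submission
  imports Defs
begin


locale GW = vector_space smul
  for smul :: "'k::field_char_0 \<Rightarrow> 'm::ab_group_add \<Rightarrow> 'm" +
  fixes n :: nat and X D :: "nat \<Rightarrow> 'm \<Rightarrow> 'm" and Md :: "int \<Rightarrow> 'm set"
  assumes linX: "i < n \<Longrightarrow> Vector_Spaces.linear smul smul (X i)"
    and linD: "i < n \<Longrightarrow> Vector_Spaces.linear smul smul (D i)"
    and Xcomm: "i < n \<Longrightarrow> j < n \<Longrightarrow> X i (X j v) = X j (X i v)"
    and weyl: "i < n \<Longrightarrow> j < n \<Longrightarrow> D i (X j v) - X j (D i v) = (if i = j then v else 0)"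
    and subsp: "Modules.module.subspace smul (Md d)"
    and decomp: "\<exists>!c :: int \<Rightarrow> 'm. finite {d. c d \<noteq> 0} \<and> (\<forall>d. c d \<in> Md d) \<and>
            v = (\<Sum>d\<in>{d. c d \<noteq> 0}. c d)"
    and Xdeg: "i < n \<Longrightarrow> v \<in> Md d \<Longrightarrow> X i v \<in> Md (d + 1)"
    and Ddeg: "i < n \<Longrightarrow> v \<in> Md d \<Longrightarrow> D i v \<in> Md (d - 1)"
    and eul: "z \<in> Md d \<Longrightarrow> \<exists>a::nat. ((\<lambda>v. (\<Sum>i<n. X i (D i v)) - smul (of_int d) v) ^^ a) z = 0"
begin

lemma X_add: "i < n \<Longrightarrow> X i (a + b) = X i a + X i b"
  using linX[of i] unfolding Vector_Spaces.linear_iff by blast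
lemma X_scale: "i < n \<Longrightarrow> X i (smul c a) = smul c (X i a)"
  using linX[of i] unfolding Vector_Spaces.linear_iff by blast
lemma D_add: "i < n \<Longrightarrow> D i (a + b) = D i a + D i b"
  using linD[of i] unfolding Vector_Spaces.linear_iff by blast
lemma D_scale: "i < n \<Longrightarrow> D i (smul c a) = smul c (D i a)"
  using linD[of i] unfolding Vector_Spaces.linear_iff by blast
lemma X_0: "i < n \<Longrightarrow> X i 0 = 0"
  by (metis X_add add_cancel_right_right)
lemma D_0: "i < n \<Longrightarrow> D i 0 = 0"
  by (metis D_add add_cancel_right_right)
lemma X_diff: "i < n \<Longrightarrow> X i (a - b) = X i a - X i b"
  by (metis X_add diff_add_cancel eq_diff_eq)
lemma X_sum: "i < n \<Longrightarrow> X i (sum g A) = (\<Sum>a\<in>A. X i (g a))"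
  by (induct A rule: infinite_finite_induct) (simp_all add: X_0 X_add)
lemma D_sum: "i < n \<Longrightarrow> D i (sum g A) = (\<Sum>a\<in>A. D i (g a))"
  by (induct A rule: infinite_finite_induct) (simp_all add: D_0 D_add)

abbreviation Xp where "Xp i m \<equiv> X i ^^ m"

lemma Xp_add: "i < n \<Longrightarrow> Xp i m (a + b) = Xp i m a + Xp i m b"
  by (induct m) (simp_all add: X_add)
lemma Xp_scale: "i < n \<Longrightarrow> Xp i m (smul c a) = smul c (Xp i m a)"
  by (induct m) (simp_all add: X_scale)
lemma Xp_0: "i < n \<Longrightarrow> Xp i m 0 = 0"
  by (induct m) (simp_all add: X_0)
lemma Xp_X: "i < n \<Longrightarrow> j < n \<Longrightarrow> Xp i m (X j v) = X j (Xp i m v)"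
  by (induct m) (simp_all add: Xcomm)
lemma Xp_Xp: "i < n \<Longrightarrow> j < n \<Longrightarrow> Xp i m (Xp j k v) = Xp j k (Xp i m v)"
  by (induct m) (simp_all add: Xp_X)
lemma D_Xp_ne: "i < n \<Longrightarrow> j < n \<Longrightarrow> i \<noteq> j \<Longrightarrow> D i (Xp j m v) = Xp j m (D i v)"
  by (induct m) (simp_all, metis weyl eq_iff_diff_eq_0)
lemma D_X_same: "i < n \<Longrightarrow> D i (X i v) = X i (D i v) + v"
  using weyl[of i i v] by (simp add: diff_eq_eq add.commute)
lemma D_Xp_same: "i < n \<Longrightarrow> D i (Xp i m v) = Xp i m (D i v) + smul (of_nat m) (Xp i (m - 1) v)"
proof (induct m)
  case 0 then show ?case by simp
next
  case (Suc m)
  have "D i (Xp i (Suc m) v) = X i (D i (Xp i m v)) + Xp i m v" using Suc by (simp add: D_X_same)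
  also have "\<dots> = X i (Xp i m (D i v)) + smul (of_nat m) (X i (Xp i (m - 1) v)) + Xp i m v"
    using Suc by (simp add: X_add X_scale)
  also have "\<dots> = Xp i (Suc m) (D i v) + smul (of_nat (Suc m)) (Xp i m v)"
  proof (cases m)
    case 0 then show ?thesis by simp
  next
    case (Suc k)
    have e: "smul (of_nat (Suc m)) y = smul (of_nat m) y + y" for y
      by (simp add: scale_left_distrib)
    have h: "X i (Xp i (m - 1) v) = Xp i m v" using Suc by simp
    show ?thesis unfolding h e by (simp only: funpow.simps o_apply add.assoc)
  qed
  finally show ?case by simp
qed


definition F :: "(nat \<Rightarrow> nat) \<Rightarrow> nat list \<Rightarrow> 'm \<Rightarrow> 'm" where
  "F k xs = fold (\<lambda>i f. (X i ^^ k i) \<circ> f) xs id"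

lemma F_Nil[simp]: "F k [] v = v" by (simp add: F_def)
lemma F_snoc: "F k (xs @ [x]) v = Xp x (k x) (F k xs v)" by (simp add: F_def)

lemma F_add: "set xs \<subseteq> {..<n} \<Longrightarrow> F k xs (a + b) = F k xs a + F k xs b"
  by (induct xs rule: rev_induct) (auto simp: F_snoc Xp_add)
lemma F_scale: "set xs \<subseteq> {..<n} \<Longrightarrow> F k xs (smul c a) = smul c (F k xs a)"
  by (induct xs rule: rev_induct) (auto simp: F_snoc Xp_scale)
lemma F_0: "set xs \<subseteq> {..<n} \<Longrightarrow> F k xs 0 = 0"
  by (induct xs rule: rev_induct) (auto simp: F_snoc Xp_0)
lemma F_X: "set xs \<subseteq> {..<n} \<Longrightarrow> i < n \<Longrightarrow> X i (F k xs v) = F k xs (X i v)"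
  by (induct xs rule: rev_induct) (auto simp: F_snoc simp flip: Xp_X)
lemma F_cong: "(\<And>i. i \<in> set xs \<Longrightarrow> k i = k' i) \<Longrightarrow> F k xs = F k' xs"
  unfolding F_def by (induct xs rule: rev_induct) auto

lemma F_Suc: "set xs \<subseteq> {..<n} \<Longrightarrow> distinct xs \<Longrightarrow> i \<in> set xs \<Longrightarrow>
   F (k(i := Suc (k i))) xs v = X i (F k xs v)"
proof (induct xs rule: rev_induct)
  case Nil then show ?case by simp
next
  case (snoc x xs)
  show ?case
  proof (cases "x = i")
    case True
    then have "i \<notin> set xs" using snoc by auto
    then have c: "F (k(i := Suc (k i))) xs = F k xs" by (intro F_cong) auto
    have e: "F (k(i := Suc (k i))) (xs@[x]) v = Xp i (Suc (k i)) (F (k(i := Suc (k i))) xs v)"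
      by (simp only: F_snoc True fun_upd_same)
    show ?thesis unfolding e c using True by (simp add: F_snoc)
  next
    case False
    then have "i \<in> set xs" using snoc by auto
    moreover have "i < n" using snoc by auto
    ultimately show ?thesis using False snoc by (simp add: F_snoc Xp_X)
  qed
qed

lemma F_D: "set xs \<subseteq> {..<n} \<Longrightarrow> distinct xs \<Longrightarrow> i < n \<Longrightarrow>
   D i (F k xs v) = F k xs (D i v) +
     (if i \<in> set xs then smul (of_nat (k i)) (F (k(i := k i - 1)) xs v) else 0)"
proof (induct xs rule: rev_induct)
  case Nil then show ?case by simp
next
  case (snoc x xs)
  have xn: "x < n" and sx: "set xs \<subseteq> {..<n}" and dx: "distinct xs" using snoc by auto
  show ?case
  proof (cases "x = i")
    case True
    then have ni: "i \<notin> set xs" using snoc by auto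
    have c: "F (k(i := k i - 1)) xs = F k xs" using ni by (intro F_cong) auto
    have "D i (F k (xs @ [x]) v) = Xp i (k i) (D i (F k xs v)) + smul (of_nat (k i)) (Xp i (k i - 1) (F k xs v))"
      using True snoc by (simp add: F_snoc D_Xp_same)
    also have "\<dots> = F k (xs @ [x]) (D i v) + smul (of_nat (k i)) (F (k(i := k i - 1)) (xs @ [x]) v)"
      using snoc(1)[OF sx dx snoc(4)] ni True c by (simp add: F_snoc)
    finally show ?thesis using True by simp
  next
    case False
    have "D i (F k (xs @ [x]) v) = Xp x (k x) (D i (F k xs v))"
      using False snoc by (simp add: F_snoc D_Xp_ne)
    also have "\<dots> = F k (xs @ [x]) (D i v) +
     (if i \<in> set xs then smul (of_nat (k i)) (F (k(i := k i - 1)) (xs @ [x]) v) else 0)"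
      using snoc(1)[OF sx dx snoc(4)] False xn by (simp add: F_snoc Xp_add Xp_scale Xp_0)
    finally show ?thesis using False by simp
  qed
qed

lemma Xp_deg: "i < n \<Longrightarrow> v \<in> Md d \<Longrightarrow> Xp i m v \<in> Md (d + int m)"
proof (induct m)
  case 0 then show ?case by simp
next
  case (Suc m) then show ?case using Xdeg[of i "Xp i m v" "d + int m"] by (simp add: ac_simps)
qed

lemma F_deg: "set xs \<subseteq> {..<n} \<Longrightarrow> distinct xs \<Longrightarrow> v \<in> Md d \<Longrightarrow>
   F k xs v \<in> Md (d + int (\<Sum>i\<in>set xs. k i))"
proof (induct xs rule: rev_induct)
  case Nil then show ?case by simp
next
  case (snoc x xs)
  then have "F k xs v \<in> Md (d + int (\<Sum>i\<in>set xs. k i))" by auto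
  then have "Xp x (k x) (F k xs v) \<in> Md (d + int (\<Sum>i\<in>set xs. k i) + int (k x))"
    using snoc by (intro Xp_deg) auto
  moreover have "d + int (\<Sum>i\<in>set xs. k i) + int (k x) = d + int (\<Sum>i\<in>set (xs@[x]). k i)"
    using snoc by simp
  ultimately show ?case by (simp only: F_snoc)
qed

lemma Xmon_F: "Xmon n X \<alpha> = F (Poly_Mapping.lookup \<alpha>) [0..<n]"
  by (simp add: Xmon_def F_def)


abbreviation XM where "XM \<alpha> \<equiv> Xmon n X \<alpha>"
definition dg :: "(nat \<Rightarrow>\<^sub>0 nat) \<Rightarrow> nat" where "dg \<alpha> = (\<Sum>i<n. Poly_Mapping.lookup \<alpha> i)"

lemma set_upt_n: "set [0..<n] \<subseteq> {..<n}" by auto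

lemma XM_add: "XM \<alpha> (a + b) = XM \<alpha> a + XM \<alpha> b"
  by (simp add: Xmon_F F_add[OF set_upt_n])
lemma XM_scale: "XM \<alpha> (smul c a) = smul c (XM \<alpha> a)"
  by (simp add: Xmon_F F_scale[OF set_upt_n])
lemma XM_0: "XM \<alpha> 0 = 0"
  by (simp add: Xmon_F F_0[OF set_upt_n])
lemma XM_diff: "XM \<alpha> (a - b) = XM \<alpha> a - XM \<alpha> b"
  by (metis XM_add diff_add_cancel eq_diff_eq)
lemma XM_sum: "XM \<alpha> (sum g A) = (\<Sum>a\<in>A. XM \<alpha> (g a))"
  by (induct A rule: infinite_finite_induct) (simp_all add: XM_0 XM_add)

lemma F_zero_k: "F (\<lambda>_. 0) xs v = v"
  by (induct xs rule: rev_induct) (simp_all add: F_snoc)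
lemma XM_zero_mon: "XM 0 v = v"
proof -
  have "Poly_Mapping.lookup (0::nat \<Rightarrow>\<^sub>0 nat) = (\<lambda>_. 0)" by (simp add: fun_eq_iff)
  then show ?thesis using F_zero_k by (simp add: Xmon_F)
qed

lemma XM_X: "i < n \<Longrightarrow> XM (\<alpha> + Poly_Mapping.single i 1) v = X i (XM \<alpha> v)"
proof -
  assume i: "i < n"
  have "Poly_Mapping.lookup (\<alpha> + Poly_Mapping.single i 1) =
        (Poly_Mapping.lookup \<alpha>)(i := Suc (Poly_Mapping.lookup \<alpha> i))"
    by (auto simp: lookup_add lookup_single)
  then show ?thesis using i by (simp add: Xmon_F F_Suc[OF set_upt_n])
qed

lemma XM_D: "i < n \<Longrightarrow> D i v = 0 \<Longrightarrow>
   D i (XM \<alpha> v) = smul (of_nat (Poly_Mapping.lookup \<alpha> i)) (XM (\<alpha> - Poly_Mapping.single i 1) v)"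
proof -
  assume i: "i < n" and dv: "D i v = 0"
  have "Poly_Mapping.lookup (\<alpha> - Poly_Mapping.single i 1) =
        (Poly_Mapping.lookup \<alpha>)(i := Poly_Mapping.lookup \<alpha> i - 1)"
    by (auto simp: lookup_minus lookup_single)
  then show ?thesis using i dv by (simp add: Xmon_F F_D[OF set_upt_n] F_0[OF set_upt_n])
qed

lemma XM_deg: "v \<in> Md d \<Longrightarrow> XM \<alpha> v \<in> Md (d + int (dg \<alpha>))"
  using F_deg[OF set_upt_n, of v d "Poly_Mapping.lookup \<alpha>"]
  by (simp add: Xmon_F dg_def atLeast0LessThan)

lemma pact_alt: "finite S \<Longrightarrow> Poly_Mapping.keys p \<subseteq> S \<Longrightarrow>
   pact n smul X p v = (\<Sum>\<alpha>\<in>S. smul (Poly_Mapping.lookup p \<alpha>) (XM \<alpha> v))"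
  unfolding pact_def
  by (rule sum.mono_neutral_left) (auto simp: not_in_keys_iff_lookup_eq_zero)

lemma pact_add: "pact n smul X (p + q) v = pact n smul X p v + pact n smul X q v"
proof -
  let ?S = "Poly_Mapping.keys p \<union> Poly_Mapping.keys q"
  have "pact n smul X (p + q) v = (\<Sum>\<alpha>\<in>?S. smul (Poly_Mapping.lookup (p+q) \<alpha>) (XM \<alpha> v))"
    using keys_add[of p q] by (intro pact_alt) auto
  also have "\<dots> = (\<Sum>\<alpha>\<in>?S. smul (Poly_Mapping.lookup p \<alpha>) (XM \<alpha> v)) +
       (\<Sum>\<alpha>\<in>?S. smul (Poly_Mapping.lookup q \<alpha>) (XM \<alpha> v))"
    by (simp add: lookup_add scale_left_distrib sum.distrib)
  also have "\<dots> = pact n smul X p v + pact n smul X q v"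
    by (subst (1 2) pact_alt[of ?S]) auto
  finally show ?thesis .
qed

lemma pact_zero: "pact n smul X 0 v = 0"
  by (simp add: pact_def)

lemma pact_diff: "pact n smul X (p - q) v = pact n smul X p v - pact n smul X q v"
  by (metis pact_add diff_add_cancel eq_diff_eq)

lemma pact_single: "pact n smul X (Poly_Mapping.single \<alpha> c) v = smul c (XM \<alpha> v)"
  by (simp add: pact_def)

lemma pact_sum: "pact n smul X (sum f A) v = (\<Sum>a\<in>A. pact n smul X (f a) v)"
  by (induct A rule: infinite_finite_induct) (simp_all add: pact_zero pact_add)

end



context GW begin

lemma comp:
  assumes A: "finite A" and f: "\<And>x. x \<in> A \<Longrightarrow> f x \<in> Md (h x)" and v: "v \<in> Md d"
    and s: "v = (\<Sum>x\<in>A. f x)"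
  shows "v = (\<Sum>x\<in>{x\<in>A. h x = d}. f x)"
proof -
  define c where "c k = (\<Sum>x\<in>{x\<in>A. h x = k}. f x)" for k
  define c' where "c' k = (if k = d then v else 0)" for k
  have cM: "c k \<in> Md k" for k unfolding c_def by (rule subspace_sum[OF subsp]) (auto intro: f)
  have cfin: "{k. c k \<noteq> 0} \<subseteq> h ` A"
  proof
    fix k assume "k \<in> {k. c k \<noteq> 0}"
    then have "{x\<in>A. h x = k} \<noteq> {}" unfolding c_def by (metis (mono_tags) mem_Collect_eq sum.empty)
    then show "k \<in> h ` A" by auto
  qed
  have fc: "finite {k. c k \<noteq> 0}" using cfin A finite_subset by blast
  have "(\<Sum>k\<in>{k. c k \<noteq> 0}. c k) = (\<Sum>k\<in>h ` A. c k)"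
    by (rule sum.mono_neutral_left) (use A cfin in auto)
  also have "\<dots> = v" unfolding c_def s by (rule sum.image_gen[symmetric]) (rule A)
  finally have c1: "finite {k. c k \<noteq> 0} \<and> (\<forall>k. c k \<in> Md k) \<and> v = (\<Sum>k\<in>{k. c k \<noteq> 0}. c k)"
    using fc cM by auto
  have c'M: "c' k \<in> Md k" for k unfolding c'_def using v subspace_0[OF subsp] by auto
  have "{k. c' k \<noteq> 0} \<subseteq> {d}" unfolding c'_def by auto
  then have fc': "finite {k. c' k \<noteq> 0}" using finite_subset by blast
  have "v = (\<Sum>k\<in>{k. c' k \<noteq> 0}. c' k)"
  proof (cases "v = 0")
    case True
    then have "{k. c' k \<noteq> 0} = {}" unfolding c'_def by auto
    then show ?thesis using True by simp
  next
    case False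
    then have "{k. c' k \<noteq> 0} = {d}" unfolding c'_def by auto
    then show ?thesis by (simp add: c'_def)
  qed
  then have c2: "finite {k. c' k \<noteq> 0} \<and> (\<forall>k. c' k \<in> Md k) \<and> v = (\<Sum>k\<in>{k. c' k \<noteq> 0}. c' k)"
    using fc' c'M by auto
  from decomp[of v] c1 c2 have "c = c'" by blast
  then have "c d = c' d" by simp
  then show ?thesis by (simp add: c_def c'_def)
qed

definition E where "E w = (\<Sum>i<n. X i (D i w))"

lemma E_add: "E (a + b) = E a + E b"
  unfolding E_def by (simp add: D_add X_add sum.distrib)
lemma E_scale: "E (smul c a) = smul c (E a)"
  unfolding E_def by (simp add: D_scale X_scale scale_sum_right)
lemma E_diff: "E (a - b) = E a - E b"
  by (metis E_add diff_add_cancel eq_diff_eq)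
lemma E_0: "E 0 = 0"
  by (metis E_add add_cancel_right_right)

lemma E_in: "z \<in> Md d \<Longrightarrow> E z \<in> Md d"
  unfolding E_def
  by (rule subspace_sum[OF subsp]) (metis Ddeg Xdeg diff_add_cancel lessThan_iff)

lemma eul_E: assumes z: "z \<in> Md d" and d: "d \<noteq> 0" shows "\<exists>w\<in>Md d. z = E w"
proof -
  define T where "T v = E v - smul (of_int d) v" for v
  obtain a where "(T ^^ a) z = 0" using eul[OF z] unfolding T_def E_def by blast
  then show ?thesis using z
  proof (induct a arbitrary: z)
    case 0 then show ?case using E_0 subspace_0[OF subsp] by auto
  next
    case (Suc a)
    have Tz: "T z \<in> Md d" unfolding T_def
      by (intro subspace_diff[OF subsp] E_in subspace_scale[OF subsp] Suc.prems)
    have "(T ^^ a) (T z) = 0" using Suc.prems by (simp add: funpow_Suc_right del: funpow.simps)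
    then obtain w' where w': "w' \<in> Md d" "T z = E w'" using Suc.hyps Tz by blast
    have dd: "(of_int d :: 'k) \<noteq> 0" using d by simp
    have "smul (of_int d) z = E z - E w'" using w'(2) unfolding T_def by (simp add: algebra_simps)
    also have "\<dots> = E (z - w')" by (simp add: E_diff)
    finally have "smul (inverse (of_int d)) (smul (of_int d) z) = smul (inverse (of_int d)) (E (z - w'))"
      by simp
    then have "z = E (smul (inverse (of_int d)) (z - w'))" using dd by (simp add: E_scale)
    moreover have "smul (inverse (of_int d)) (z - w') \<in> Md d"
      by (intro subspace_scale[OF subsp] subspace_diff[OF subsp] Suc.prems w')
    ultimately show ?case by blast
  qed
qed

lemma eul_split: assumes z: "z \<in> Md d" and d: "d \<noteq> 0"
  shows "\<exists>w. (\<forall>i<n. w i \<in> Md (d - 1)) \<and> z = (\<Sum>i<n. X i (w i))"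
proof -
  obtain w where "w \<in> Md d" "z = E w" using eul_E[OF z d] by blast
  then show ?thesis unfolding E_def by (intro exI[of _ "\<lambda>i. D i w"]) (auto intro: Ddeg)
qed

end



locale GWF = GW +
  assumes fg: "fin_gen_R n smul X"
begin

definition G where "G = (SOME G. finite G \<and> (\<forall>v. \<exists>c. (\<forall>g\<in>G. c g \<in> polyR n) \<and>
     v = (\<Sum>g\<in>G. pact n smul X (c g) g)))"

lemma G: "finite G" "\<And>v. \<exists>c. (\<forall>g\<in>G. c g \<in> polyR n) \<and> v = (\<Sum>g\<in>G. pact n smul X (c g) g)"
proof -
  have "\<exists>G. finite G \<and> (\<forall>v. \<exists>c. (\<forall>g\<in>G. c g \<in> polyR n) \<and> v = (\<Sum>g\<in>G. pact n smul X (c g) g))"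
    using fg unfolding fin_gen_R_def by blast
  from someI_ex[OF this] show "finite G" "\<And>v. \<exists>c. (\<forall>g\<in>G. c g \<in> polyR n) \<and> v = (\<Sum>g\<in>G. pact n smul X (c g) g)"
    unfolding G_def by blast+
qed

definition cg where "cg g = (THE c. finite {d. c d \<noteq> 0} \<and> (\<forall>d. c d \<in> Md d) \<and>
            g = (\<Sum>d\<in>{d. c d \<noteq> 0}. c d))"

lemma cg: "finite {d. cg g d \<noteq> 0}" "cg g d \<in> Md d" "g = (\<Sum>k\<in>{d. cg g d \<noteq> 0}. cg g k)"
  using theI'[OF decomp[of g]] unfolding cg_def[symmetric] by blast+

definition S where "S g = {d. cg g d \<noteq> 0}"

definition A where "A c = Sigma G (\<lambda>g. Poly_Mapping.keys (c g) \<times> S g)"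
definition f where "f c = (\<lambda>(g, \<alpha>, k). smul (Poly_Mapping.lookup (c g) \<alpha>) (XM \<alpha> (cg g k)))"
definition h :: "'m \<times> (nat \<Rightarrow>\<^sub>0 nat) \<times> int \<Rightarrow> int" where "h = (\<lambda>(g, \<alpha>, k). k + int (dg \<alpha>))"

lemma A_fin: "finite (A c)"
  unfolding A_def S_def using G(1) cg(1) by (intro finite_SigmaI) auto

lemma f_in: "f c x \<in> Md (h x)"
  unfolding f_def h_def by (auto split: prod.splits intro!: subspace_scale[OF subsp] XM_deg cg(2))

lemma rep: "\<exists>c. (\<forall>g\<in>G. c g \<in> polyR n) \<and> v = (\<Sum>x\<in>A c. f c x)"
proof -
  obtain c where c: "\<forall>g\<in>G. c g \<in> polyR n" "v = (\<Sum>g\<in>G. pact n smul X (c g) g)" using G(2) by blast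
  have "pact n smul X (c g) g = (\<Sum>p\<in>Poly_Mapping.keys (c g) \<times> S g. f c (g, p))" for g
  proof -
    have "pact n smul X (c g) g = (\<Sum>\<alpha>\<in>Poly_Mapping.keys (c g). \<Sum>k\<in>S g.
            smul (Poly_Mapping.lookup (c g) \<alpha>) (XM \<alpha> (cg g k)))"
      unfolding pact_def S_def by (subst (1) cg(3)[of g]) (simp add: XM_sum scale_sum_right)
    also have "\<dots> = (\<Sum>p\<in>Poly_Mapping.keys (c g) \<times> S g. f c (g, p))"
      by (subst sum.cartesian_product) (simp add: f_def case_prod_beta)
    finally show ?thesis .
  qed
  then have "v = (\<Sum>g\<in>G. \<Sum>p\<in>Poly_Mapping.keys (c g) \<times> S g. f c (g, p))" using c(2) by simp
  also have "\<dots> = (\<Sum>x\<in>A c. f c x)"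
    unfolding A_def using G(1) cg(1) by (subst sum.Sigma) (auto simp: S_def)
  finally show ?thesis using c(1) by blast
qed

definition Lb where "Lb = Min (insert 0 (\<Union>g\<in>G. S g))"

lemma Lb_le: "x \<in> A c \<Longrightarrow> Lb \<le> h x"
proof -
  assume x: "x \<in> A c"
  obtain g \<alpha> k where xe: "x = (g, \<alpha>, k)" by (cases x) auto
  have fin: "finite (insert 0 (\<Union>g\<in>G. S g))" using G(1) cg(1) by (auto simp: S_def)
  have "k \<in> insert 0 (\<Union>g\<in>G. S g)" using x xe by (auto simp: A_def)
  then have "Lb \<le> k" unfolding Lb_def using fin by simp
  then show ?thesis using xe by (simp add: h_def)
qed

lemma low: "d < Lb \<Longrightarrow> v \<in> Md d \<Longrightarrow> v = 0"
proof -
  assume d: "d < Lb" and v: "v \<in> Md d"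
  obtain c where c: "v = (\<Sum>x\<in>A c. f c x)" using rep by blast
  have "v = (\<Sum>x\<in>{x\<in>A c. h x = d}. f c x)" by (rule comp[OF A_fin f_in v c])
  also have "{x\<in>A c. h x = d} = {}" using Lb_le d by force
  finally show ?thesis by simp
qed

lemma neg_aux: "d < Lb + int j \<Longrightarrow> d < 0 \<Longrightarrow> v \<in> Md d \<Longrightarrow> v = 0"
proof (induct j arbitrary: d v)
  case 0 then show ?case using low by simp
next
  case (Suc j)
  show ?case
  proof (cases "d < Lb + int j")
    case True then show ?thesis using Suc by blast
  next
    case False
    obtain w where w: "\<forall>i<n. w i \<in> Md (d - 1)" "v = (\<Sum>i<n. X i (w i))"
      using eul_split[OF Suc.prems(3)] Suc.prems(2) by auto
    have "\<forall>i<n. w i = 0" using w(1) Suc.hyps[of "d - 1"] False Suc.prems by auto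
    then show ?thesis using w(2) X_0 by simp
  qed
qed

lemma neg: "d < 0 \<Longrightarrow> v \<in> Md d \<Longrightarrow> v = 0"
  by (rule neg_aux[of d "nat (d - Lb + 1)"]) auto

end



context GWF begin

definition H0 where "H0 = (\<lambda>g. cg g 0) ` G"

lemma dg0: "(\<forall>i\<in>Poly_Mapping.keys \<alpha>. i < n) \<Longrightarrow> dg \<alpha> = 0 \<Longrightarrow> \<alpha> = 0"
proof -
  assume k: "\<forall>i\<in>Poly_Mapping.keys \<alpha>. i < n" and d: "dg \<alpha> = 0"
  show "\<alpha> = 0"
  proof (rule poly_mapping_eqI)
    fix i
    show "Poly_Mapping.lookup \<alpha> i = Poly_Mapping.lookup 0 i"
    proof (cases "i < n")
      case True
      have "(\<Sum>i<n. Poly_Mapping.lookup \<alpha> i) = 0" using d by (simp add: dg_def)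
      then show ?thesis using True by (subst (asm) sum_eq_0_iff) auto
    next
      case False then show ?thesis using k by (auto simp: not_in_keys_iff_lookup_eq_zero[symmetric])
    qed
  qed
qed

lemma M0_span: "v \<in> Md 0 \<Longrightarrow> v \<in> span H0"
proof -
  assume v: "v \<in> Md 0"
  obtain c where c: "\<forall>g\<in>G. c g \<in> polyR n" "v = (\<Sum>x\<in>A c. f c x)" using rep by blast
  have "v = (\<Sum>x\<in>{x\<in>A c. h x = 0}. f c x)" by (rule comp[OF A_fin f_in v c(2)])
  also have "\<dots> \<in> span H0"
  proof (rule span_sum)
    fix x assume x: "x \<in> {x\<in>A c. h x = 0}"
    obtain g \<alpha> k where xe: "x = (g, \<alpha>, k)" by (cases x) auto
    have g: "g \<in> G" and a: "\<alpha> \<in> Poly_Mapping.keys (c g)" and hk: "k + int (dg \<alpha>) = 0"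
      using x xe by (auto simp: A_def h_def)
    show "f c x \<in> span H0"
    proof (cases "k < 0")
      case True
      then have "cg g k = 0" by (rule neg[OF _ cg(2)])
      then show ?thesis using xe by (simp add: f_def XM_0 span_zero)
    next
      case False
      then have k0: "k = 0" and d0: "dg \<alpha> = 0" using hk by linarith+
      moreover have "\<forall>i\<in>Poly_Mapping.keys \<alpha>. i < n" using c(1) g a by (auto simp: polyR_def)
      ultimately have "\<alpha> = 0" using dg0 by blast
      moreover have "cg g 0 \<in> H0" using g by (simp add: H0_def)
      ultimately show ?thesis using xe k0
        by (simp add: f_def XM_zero_mon span_scale span_base)
    qed
  qed
  finally show ?thesis .
qed

lemma basis_M0: "\<exists>B. B \<subseteq> Md 0 \<and> independent B \<and> Md 0 \<subseteq> span B \<and> finite B"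
proof -
  obtain B where B: "B \<subseteq> Md 0" "independent B" "Md 0 \<subseteq> span B" by (rule basis_exists)
  have "finite H0" using G(1) by (simp add: H0_def)
  moreover have "B \<subseteq> span H0" using B(1) M0_span by blast
  ultimately have "finite B" using independent_span_bound[OF _ B(2)] by blast
  then show ?thesis using B by blast
qed

definition Phi where
  "Phi (e::nat \<Rightarrow> _) (m::nat) ps = (\<Sum>j<m. pact n smul X (ps j) (e j))"
definition valid where
  "valid (m::nat) ps \<longleftrightarrow> (\<forall>j. (j < m \<longrightarrow> ps j \<in> polyR n) \<and> (m \<le> j \<longrightarrow> ps j = 0))"

definition BX where "BX (e::nat \<Rightarrow> _) (m::nat) = {XM \<alpha> (e j) | \<alpha> j. j < m \<and> (\<forall>i\<in>Poly_Mapping.keys \<alpha>. i < n)}"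

lemma X_span: "i < n \<Longrightarrow> y \<in> span (BX e m) \<Longrightarrow> X i y \<in> span (BX e m)"
proof -
  assume i: "i < n" and y: "y \<in> span (BX e m)"
  from y show "X i y \<in> span (BX e m)"
  proof (induct rule: span_induct_alt)
    case base then show ?case using X_0[OF i] span_zero by simp
  next
    case (step c x y)
    then obtain \<alpha> j where x: "x = XM \<alpha> (e j)" "j < m" "\<forall>i\<in>Poly_Mapping.keys \<alpha>. i < n"
      by (auto simp: BX_def)
    have "X i x = XM (\<alpha> + Poly_Mapping.single i 1) (e j)" using XM_X[OF i, of \<alpha> "e j"] x by simp
    moreover have "\<forall>l\<in>Poly_Mapping.keys (\<alpha> + Poly_Mapping.single i 1). l < n"
      using x(3) i keys_add[of \<alpha> "Poly_Mapping.single i 1"] by auto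
    ultimately have "X i x \<in> BX e m" using x(2) unfolding BX_def by blast
    then show ?case using step i by (simp add: X_add X_scale span_add span_scale span_base)
  qed
qed

lemma surj_span:
  assumes e0: "Md 0 \<subseteq> span (e ` {..<m})"
  shows "v \<in> span (BX e m)"
proof -
  have sub: "e ` {..<m} \<subseteq> BX e m"
  proof
    fix x assume "x \<in> e ` {..<m}"
    then obtain j where "j < m" "x = e j" by auto
    then show "x \<in> BX e m" unfolding BX_def
      by (intro CollectI exI[of _ 0] exI[of _ j]) (simp add: XM_zero_mon)
  qed
  have deg: "v \<in> Md (int k) \<Longrightarrow> v \<in> span (BX e m)" for k v
  proof (induct k arbitrary: v)
    case 0 then show ?case using e0 span_mono[OF sub] by auto
  next
    case (Suc k)
    obtain w where w: "\<forall>i<n. w i \<in> Md (int (Suc k) - 1)" "v = (\<Sum>i<n. X i (w i))"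
      using eul_split[OF Suc.prems] by auto
    show ?case unfolding w(2)
      by (rule span_sum) (use w(1) Suc.hyps in \<open>auto intro: X_span\<close>)
  qed
  have degall: "v \<in> Md d \<Longrightarrow> v \<in> span (BX e m)" for d v
  proof (cases "d < 0")
    case True
    assume "v \<in> Md d" then show ?thesis using neg True span_zero by blast
  next
    case False
    assume "v \<in> Md d" then show ?thesis using deg[of v "nat d"] False by simp
  qed
  have "v = (\<Sum>k\<in>{d. cg v d \<noteq> 0}. cg v k)" by (rule cg(3))
  also have "\<dots> \<in> span (BX e m)" by (rule span_sum) (rule degall[OF cg(2)])
  finally show ?thesis .
qed

lemma span_Phi:
  assumes "y \<in> span (BX e m)"
  shows "\<exists>ps. valid m ps \<and> y = Phi e m ps"
  using assms
proof (induct rule: span_induct_alt)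
  case base
  show ?case by (intro exI[of _ "\<lambda>_. 0"]) (simp add: valid_def Phi_def pact_zero polyR_def)
next
  case (step c x y)
  obtain ps where ps: "valid m ps" "y = Phi e m ps" using step by blast
  obtain \<alpha> j where x: "x = XM \<alpha> (e j)" "j < m" "\<forall>i\<in>Poly_Mapping.keys \<alpha>. i < n"
    using step by (auto simp: BX_def)
  define ps' where "ps' l = ps l + (if l = j then Poly_Mapping.single \<alpha> c else 0)" for l
  have "valid m ps'"
    unfolding valid_def
  proof (intro allI conjI impI)
    fix l assume l: "l < m"
    then have "ps l \<in> polyR n" using ps(1) by (simp add: valid_def)
    then show "ps' l \<in> polyR n" unfolding ps'_def polyR_def
      using keys_add[of "ps l" "if l = j then Poly_Mapping.single \<alpha> c else 0"] x(3)
      by (auto split: if_splits)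
  next
    fix l assume "m \<le> l" then show "ps' l = 0" using ps(1) x(2) by (auto simp: valid_def ps'_def)
  qed
  moreover have "Phi e m ps' = smul c x + y"
  proof -
    have "Phi e m ps' = Phi e m ps + (\<Sum>l<m. pact n smul X (if l = j then Poly_Mapping.single \<alpha> c else 0) (e l))"
      unfolding Phi_def ps'_def by (simp add: pact_add sum.distrib)
    also have "(\<Sum>l<m. pact n smul X (if l = j then Poly_Mapping.single \<alpha> c else 0) (e l)) =
        (\<Sum>l<m. if l = j then smul c x else 0)"
      by (rule sum.cong) (auto simp: pact_zero pact_single x(1))
    also have "\<dots> = smul c x" using x(2) by simp
    finally show ?thesis using ps(2) by (simp add: add.commute)
  qed
  ultimately show ?case by (intro exI[of _ ps'] conjI) simp_all
qed

end



context GWF begin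

definition Dl :: "nat list \<Rightarrow> _" where "Dl L v = foldl (\<lambda>w i. D i w) v L"

lemma Dl_Nil[simp]: "Dl [] v = v" by (simp add: Dl_def)
lemma Dl_Cons: "Dl (i # L) v = Dl L (D i v)" by (simp add: Dl_def)

lemma Dl_add: "set L \<subseteq> {..<n} \<Longrightarrow> Dl L (a + b) = Dl L a + Dl L b"
  by (induct L arbitrary: a b) (auto simp: Dl_Cons D_add)
lemma Dl_scale: "set L \<subseteq> {..<n} \<Longrightarrow> Dl L (smul c a) = smul c (Dl L a)"
  by (induct L arbitrary: a) (auto simp: Dl_Cons D_scale)
lemma Dl_0: "set L \<subseteq> {..<n} \<Longrightarrow> Dl L 0 = 0"
  by (induct L) (auto simp: Dl_Cons D_0)
lemma Dl_sum: "set L \<subseteq> {..<n} \<Longrightarrow> Dl L (sum g Y) = (\<Sum>a\<in>Y. Dl L (g a))"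
  by (induct Y rule: infinite_finite_induct) (simp_all add: Dl_0 Dl_add)

lemma De0: "i < n \<Longrightarrow> e \<in> Md 0 \<Longrightarrow> D i e = 0"
  using Ddeg[of i e 0] neg[of "0 - 1"] by simp

lemma lookup_ms: "Poly_Mapping.lookup (\<beta> - Poly_Mapping.single i 1) j =
    Poly_Mapping.lookup \<beta> j - (if i = j then 1 else 0)"
  by (simp add: lookup_minus lookup_single)

lemma lookup_ms': "Poly_Mapping.lookup (\<beta> - Poly_Mapping.single i (Suc 0)) j =
    Poly_Mapping.lookup \<beta> j - (if i = j then 1 else 0)"
  by (simp add: lookup_minus lookup_single)

lemma dg_minus: assumes i: "i < n" and b: "Poly_Mapping.lookup \<beta> i \<ge> 1"
  shows "dg (\<beta> - Poly_Mapping.single i 1) = dg \<beta> - 1"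
proof -
  let ?b' = "\<beta> - Poly_Mapping.single i 1"
  have "dg \<beta> = Poly_Mapping.lookup \<beta> i + (\<Sum>j\<in>{..<n} - {i}. Poly_Mapping.lookup \<beta> j)"
    unfolding dg_def using i by (subst sum.remove[of _ i]) auto
  moreover have "dg ?b' = Poly_Mapping.lookup ?b' i + (\<Sum>j\<in>{..<n} - {i}. Poly_Mapping.lookup ?b' j)"
    unfolding dg_def using i by (subst sum.remove[of _ i]) auto
  moreover have "(\<Sum>j\<in>{..<n} - {i}. Poly_Mapping.lookup ?b' j) = (\<Sum>j\<in>{..<n} - {i}. Poly_Mapping.lookup \<beta> j)"
    by (rule sum.cong) (auto simp: lookup_ms lookup_ms')
  ultimately show ?thesis using b by (simp add: lookup_ms lookup_ms')
qed

lemma fact_minus: assumes i: "i < n" and b: "Poly_Mapping.lookup \<beta> i \<ge> 1"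
  shows "Poly_Mapping.lookup \<beta> i * (\<Prod>j<n. fact (Poly_Mapping.lookup (\<beta> - Poly_Mapping.single i 1) j))
     = (\<Prod>j<n. fact (Poly_Mapping.lookup \<beta> j) :: nat)"
proof -
  let ?b' = "\<beta> - Poly_Mapping.single i 1"
  have "(\<Prod>j<n. fact (Poly_Mapping.lookup \<beta> j) :: nat) =
      fact (Poly_Mapping.lookup \<beta> i) * (\<Prod>j\<in>{..<n} - {i}. fact (Poly_Mapping.lookup \<beta> j))"
    using i by (subst prod.remove[of _ i]) auto
  moreover have "(\<Prod>j<n. fact (Poly_Mapping.lookup ?b' j) :: nat) =
      fact (Poly_Mapping.lookup ?b' i) * (\<Prod>j\<in>{..<n} - {i}. fact (Poly_Mapping.lookup ?b' j))"
    using i by (subst prod.remove[of _ i]) auto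
  moreover have "(\<Prod>j\<in>{..<n} - {i}. fact (Poly_Mapping.lookup ?b' j) :: nat) =
       (\<Prod>j\<in>{..<n} - {i}. fact (Poly_Mapping.lookup \<beta> j))"
    by (rule prod.cong) (auto simp: lookup_ms lookup_ms')
  moreover have "Poly_Mapping.lookup \<beta> i * fact (Poly_Mapping.lookup ?b' i) = (fact (Poly_Mapping.lookup \<beta> i) :: nat)"
    using b by (simp add: lookup_ms lookup_ms' fact_reduce)
  ultimately show ?thesis by (simp add: mult.assoc[symmetric])
qed

lemma Dl_XM:
  assumes "set L \<subseteq> {..<n}" "e \<in> Md 0" "\<forall>i\<in>Poly_Mapping.keys \<beta>. i < n" "dg \<beta> \<le> length L"
  shows "Dl L (XM \<beta> e) = (if (\<forall>i. count_list L i = Poly_Mapping.lookup \<beta> i)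
           then smul (of_nat (\<Prod>i<n. fact (Poly_Mapping.lookup \<beta> i))) e else 0)"
  using assms
proof (induct L arbitrary: \<beta>)
  case Nil
  then have "\<beta> = 0" using dg0 by simp
  then show ?case by (simp add: XM_zero_mon)
next
  case (Cons i L)
  have i: "i < n" and L: "set L \<subseteq> {..<n}" using Cons.prems by auto
  let ?b' = "\<beta> - Poly_Mapping.single i 1"
  have "Dl (i # L) (XM \<beta> e) = smul (of_nat (Poly_Mapping.lookup \<beta> i)) (Dl L (XM ?b' e))"
    by (simp add: Dl_Cons XM_D[OF i De0[OF i Cons.prems(2)]] Dl_scale[OF L])
  also have "\<dots> = (if (\<forall>j. count_list (i # L) j = Poly_Mapping.lookup \<beta> j)
           then smul (of_nat (\<Prod>i<n. fact (Poly_Mapping.lookup \<beta> i))) e else 0)"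
  proof (cases "Poly_Mapping.lookup \<beta> i = 0")
    case True
    then have "\<not> (\<forall>j. count_list (i # L) j = Poly_Mapping.lookup \<beta> j)"
      by (metis count_list.simps(2) add_is_0 one_neq_zero)
    then show ?thesis using True by (subst if_not_P) simp_all
  next
    case False
    then have b1: "Poly_Mapping.lookup \<beta> i \<ge> 1" by simp
    have kb': "\<forall>j\<in>Poly_Mapping.keys ?b'. j < n"
      using Cons.prems(3) i by (auto simp: in_keys_iff lookup_ms lookup_ms' split: if_splits)
    have db': "dg ?b' \<le> length L" using dg_minus[OF i b1] Cons.prems(4) by simp
    have IH: "Dl L (XM ?b' e) = (if (\<forall>j. count_list L j = Poly_Mapping.lookup ?b' j)
           then smul (of_nat (\<Prod>i<n. fact (Poly_Mapping.lookup ?b' i))) e else 0)"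
      by (rule Cons.hyps[OF L Cons.prems(2) kb' db'])
    have ceq: "(\<forall>j. count_list L j = Poly_Mapping.lookup ?b' j) \<longleftrightarrow>
               (\<forall>j. count_list (i # L) j = Poly_Mapping.lookup \<beta> j)"
    proof
      assume H: "\<forall>j. count_list L j = Poly_Mapping.lookup ?b' j"
      show "\<forall>j. count_list (i # L) j = Poly_Mapping.lookup \<beta> j"
      proof
        fix j show "count_list (i # L) j = Poly_Mapping.lookup \<beta> j"
          using H[rule_format, of j] b1 by (auto simp: lookup_ms lookup_ms')
      qed
    next
      assume H: "\<forall>j. count_list (i # L) j = Poly_Mapping.lookup \<beta> j"
      show "\<forall>j. count_list L j = Poly_Mapping.lookup ?b' j"
      proof
        fix j show "count_list L j = Poly_Mapping.lookup ?b' j"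
          using H[rule_format, of j] b1 by (auto simp: lookup_ms lookup_ms' split: if_splits)
      qed
    qed
    have "smul (of_nat (Poly_Mapping.lookup \<beta> i)) (smul (of_nat (\<Prod>i<n. fact (Poly_Mapping.lookup ?b' i))) e)
        = smul (of_nat (\<Prod>i<n. fact (Poly_Mapping.lookup \<beta> i))) e"
      by (simp only: scale_scale of_nat_mult[symmetric] fact_minus[OF i b1])
    then show ?thesis unfolding IH ceq by simp
  qed
  finally show ?case .
qed

lemma L_exists: "(\<forall>i\<in>Poly_Mapping.keys \<alpha>. i < n) \<Longrightarrow>
   \<exists>L. set L \<subseteq> {..<n} \<and> length L = dg \<alpha> \<and> (\<forall>i. count_list L i = Poly_Mapping.lookup \<alpha> i)"
proof (induct "dg \<alpha>" arbitrary: \<alpha>)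
  case 0
  then have "\<alpha> = 0" using dg0 by simp
  then show ?case by (intro exI[of _ "[]"]) (auto simp: dg_def)
next
  case (Suc k)
  then have "\<alpha> \<noteq> 0" by (auto simp: dg_def)
  then obtain i where ik: "i \<in> Poly_Mapping.keys \<alpha>" by (metis keys_eq_empty ex_in_conv)
  then have i: "i < n" and b1: "Poly_Mapping.lookup \<alpha> i \<ge> 1" using Suc.prems by (auto simp: in_keys_iff)
  let ?b' = "\<alpha> - Poly_Mapping.single i 1"
  have kb': "\<forall>j\<in>Poly_Mapping.keys ?b'. j < n"
    using Suc.prems i by (auto simp: in_keys_iff lookup_ms lookup_ms' split: if_splits)
  have "k = dg ?b'" using dg_minus[OF i b1] Suc.hyps(2) by simp
  then obtain L where L: "set L \<subseteq> {..<n}" "length L = dg ?b'" "\<forall>j. count_list L j = Poly_Mapping.lookup ?b' j"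
    using Suc.hyps(1) kb' by blast
  show ?case
  proof (intro exI[of _ "i # L"] conjI allI)
    show "set (i # L) \<subseteq> {..<n}" using L i by auto
    show "length (i # L) = dg \<alpha>" using L dg_minus[OF i b1] Suc.hyps(2) by simp
    fix j show "count_list (i # L) j = Poly_Mapping.lookup \<alpha> j"
      using L(3)[rule_format, of j] b1 by (auto simp: lookup_ms lookup_ms')
  qed
qed

end



context GWF begin

lemma Phi_diff: "Phi e m ps - Phi e m qs = Phi e m (\<lambda>j. ps j - qs j)"
  unfolding Phi_def by (simp add: pact_diff sum_subtractf)

lemma valid_diff: "valid m ps \<Longrightarrow> valid m qs \<Longrightarrow> valid m (\<lambda>j. ps j - qs j)"
proof -
  assume vp: "valid m ps" and vq: "valid m qs"
  show "valid m (\<lambda>j. ps j - qs j)" unfolding valid_def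
  proof (intro allI conjI impI)
    fix j assume "j < m"
    then have "ps j \<in> polyR n" "qs j \<in> polyR n" using vp vq by (auto simp: valid_def)
    then show "ps j - qs j \<in> polyR n" using keys_diff[of "ps j" "qs j"] unfolding polyR_def by blast
  next
    fix j assume "m \<le> j" then show "ps j - qs j = 0" using vp vq by (simp add: valid_def)
  qed
qed

lemma Phi_zero:
  assumes e: "\<forall>j<m. e j \<in> Md 0" "inj_on e {..<m}" "independent (e ` {..<m})"
    and v: "valid m rs" "Phi e m rs = 0"
  shows "rs j = 0"
proof (rule ccontr)
  assume j0: "rs j \<noteq> 0"
  then have jm: "j < m" using v(1) by (meson valid_def not_le)
  define K where "K = (\<Union>j<m. Poly_Mapping.keys (rs j))"
  have Kfin: "finite K" by (simp add: K_def)
  have "Poly_Mapping.keys (rs j) \<noteq> {}" using j0 by simp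
  then have Kne: "K \<noteq> {}" using jm by (auto simp: K_def)
  have kK: "\<forall>i\<in>Poly_Mapping.keys \<beta>. i < n" if "\<beta> \<in> K" for \<beta>
    using that v(1) by (auto simp: K_def valid_def polyR_def)
  obtain \<alpha> where aK: "\<alpha> \<in> K" and amax: "\<forall>\<beta>\<in>K. dg \<beta> \<le> dg \<alpha>"
  proof -
    have "Max (dg ` K) \<in> dg ` K" using Kfin Kne by (intro Max_in) auto
    then obtain \<alpha> where "\<alpha> \<in> K" "dg \<alpha> = Max (dg ` K)" by auto
    moreover have "\<forall>\<beta>\<in>K. dg \<beta> \<le> Max (dg ` K)" using Kfin by auto
    ultimately show ?thesis using that by auto
  qed
  obtain L where L: "set L \<subseteq> {..<n}" "length L = dg \<alpha>" "\<forall>i. count_list L i = Poly_Mapping.lookup \<alpha> i"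
    using L_exists[OF kK[OF aK]] by blast
  define P where "P = (\<Prod>i<n. fact (Poly_Mapping.lookup \<alpha> i) :: nat)"
  have P0: "P \<noteq> 0" unfolding P_def by (simp add: prod_zero_iff)
  have tm: "Dl L (XM \<beta> (e l)) = (if \<beta> = \<alpha> then smul (of_nat P) (e l) else 0)"
    if b: "\<beta> \<in> K" and l: "l < m" for \<beta> l
  proof -
    have "Dl L (XM \<beta> (e l)) = (if (\<forall>i. count_list L i = Poly_Mapping.lookup \<beta> i)
           then smul (of_nat (\<Prod>i<n. fact (Poly_Mapping.lookup \<beta> i))) (e l) else 0)"
      using L(1,2) e(1) l kK[OF b] amax b by (intro Dl_XM) auto
    moreover have "(\<forall>i. count_list L i = Poly_Mapping.lookup \<beta> i) \<longleftrightarrow> \<beta> = \<alpha>"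
      using L(3) poly_mapping_eqI[of \<alpha> \<beta>] by auto
    ultimately show ?thesis by (auto simp: P_def)
  qed
  have "0 = Dl L (Phi e m rs)" using v(2) Dl_0[OF L(1)] by simp
  also have "\<dots> = (\<Sum>l<m. Dl L (pact n smul X (rs l) (e l)))"
    unfolding Phi_def by (rule Dl_sum[OF L(1)])
  also have "\<dots> = (\<Sum>l<m. \<Sum>\<beta>\<in>K. smul (Poly_Mapping.lookup (rs l) \<beta>) (Dl L (XM \<beta> (e l))))"
  proof (rule sum.cong)
    fix l assume "l \<in> {..<m}"
    then have "Poly_Mapping.keys (rs l) \<subseteq> K" by (auto simp: K_def)
    then show "Dl L (pact n smul X (rs l) (e l)) =
        (\<Sum>\<beta>\<in>K. smul (Poly_Mapping.lookup (rs l) \<beta>) (Dl L (XM \<beta> (e l))))"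
      by (simp add: pact_alt[OF Kfin] Dl_sum[OF L(1)] Dl_scale[OF L(1)])
  qed simp
  also have "\<dots> = (\<Sum>l<m. smul (Poly_Mapping.lookup (rs l) \<alpha> * of_nat P) (e l))"
  proof (rule sum.cong)
    fix l assume l: "l \<in> {..<m}"
    have "(\<Sum>\<beta>\<in>K. smul (Poly_Mapping.lookup (rs l) \<beta>) (Dl L (XM \<beta> (e l)))) =
          (\<Sum>\<beta>\<in>K. if \<beta> = \<alpha> then smul (Poly_Mapping.lookup (rs l) \<alpha> * of_nat P) (e l) else 0)"
      by (rule sum.cong) (use l tm in auto)
    also have "\<dots> = smul (Poly_Mapping.lookup (rs l) \<alpha> * of_nat P) (e l)"
      using Kfin aK by simp
    finally show "(\<Sum>\<beta>\<in>K. smul (Poly_Mapping.lookup (rs l) \<beta>) (Dl L (XM \<beta> (e l)))) =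
          smul (Poly_Mapping.lookup (rs l) \<alpha> * of_nat P) (e l)" .
  qed simp
  finally have sum0: "(\<Sum>l<m. smul (Poly_Mapping.lookup (rs l) \<alpha> * of_nat P) (e l)) = 0" by simp
  define u where "u w = Poly_Mapping.lookup (rs (inv_into {..<m} e w)) \<alpha> * of_nat P" for w
  have "(\<Sum>w\<in>e ` {..<m}. smul (u w) w) = (\<Sum>l<m. smul (u (e l)) (e l))"
    by (rule sum.reindex[OF e(2), unfolded comp_def])
  also have "\<dots> = (\<Sum>l<m. smul (Poly_Mapping.lookup (rs l) \<alpha> * of_nat P) (e l))"
    by (rule sum.cong) (auto simp: u_def inv_into_f_f[OF e(2)])
  finally have "(\<Sum>w\<in>e ` {..<m}. smul (u w) w) = 0" using sum0 by simp
  then have uz: "u (e l) = 0" if "l < m" for l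
    using independentD[OF e(3) _ order_refl] that by auto
  have all0: "Poly_Mapping.lookup (rs l) \<alpha> = 0" if "l < m" for l
    using uz[OF that] P0 by (simp add: u_def inv_into_f_f[OF e(2)] that)
  from aK obtain l where "l < m" "\<alpha> \<in> Poly_Mapping.keys (rs l)" by (auto simp: K_def)
  then show False using all0 by (simp add: in_keys_iff)
qed

lemma main: "(\<forall>v\<in>Md 0 \<union> UNIV. v = 0) \<or> (\<exists>m\<ge>1. free_deg0 n smul X Md m)"
proof -
  obtain B where B: "B \<subseteq> Md 0" "independent B" "Md 0 \<subseteq> span B" "finite B" using basis_M0 by blast
  define m where "m = card B"
  obtain e where e: "bij_betw e {..<m} B"
    using ex_bij_betw_nat_finite[OF B(4)] by (auto simp: m_def atLeast0LessThan)
  have eB: "e ` {..<m} = B" using e by (simp add: bij_betw_def)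
  have einj: "inj_on e {..<m}" using e by (simp add: bij_betw_def)
  have sp: "Md 0 \<subseteq> span (e ` {..<m})" using B(3) eB by simp
  show ?thesis
  proof (cases "m = 0")
    case True
    have "BX e m = {}" using True by (simp add: BX_def)
    then have "\<forall>v\<in>Md 0 \<union> UNIV. v = 0" using surj_span[OF sp] by simp
    then show ?thesis by blast
  next
    case False
    have e0: "\<forall>j<m. e j \<in> Md 0" using eB B(1) by auto
    have ind: "independent (e ` {..<m})" using eB B(2) by simp
    have setq: "{ps. \<forall>j. (j < m \<longrightarrow> ps j \<in> polyR n) \<and> (m \<le> j \<longrightarrow> ps j = 0)} = {ps. valid m ps}"
      by (simp add: valid_def)
    have phq: "(\<lambda>ps. \<Sum>j<m. pact n smul X (ps j) (e j)) = Phi e m"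
      by (simp add: Phi_def fun_eq_iff)
    have "bij_betw (Phi e m) {ps. valid m ps} UNIV"
      unfolding bij_betw_def
    proof
      show "inj_on (Phi e m) {ps. valid m ps}"
      proof (rule inj_onI)
        fix ps qs assume ps: "ps \<in> {ps. valid m ps}" and qs: "qs \<in> {ps. valid m ps}"
          and eq: "Phi e m ps = Phi e m qs"
        have "Phi e m (\<lambda>j. ps j - qs j) = 0" using eq Phi_diff[of e m ps qs] by simp
        then have "ps j - qs j = 0" for j
          using Phi_zero[OF e0 einj ind valid_diff] ps qs by simp
        then show "ps = qs" by (simp add: fun_eq_iff)
      qed
      show "Phi e m ` {ps. valid m ps} = UNIV"
      proof -
        have "v \<in> Phi e m ` {ps. valid m ps}" for v
        proof -
          obtain ps where "valid m ps" "v = Phi e m ps" using span_Phi[OF surj_span[OF sp]] by blast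
          then show ?thesis by auto
        qed
        then show ?thesis by auto
      qed
    qed
    note bij = this
    have "free_deg0 n smul X Md m" unfolding free_deg0_def
    proof (intro exI[of _ e] conjI)
      show "\<forall>j<m. e j \<in> Md 0" by (rule e0)
      show "bij_betw (\<lambda>ps. \<Sum>j<m. pact n smul X (ps j) (e j))
          {ps. \<forall>j. (j < m \<longrightarrow> ps j \<in> polyR n) \<and> (m \<le> j \<longrightarrow> ps j = 0)} UNIV"
        unfolding setq phq by (rule bij)
    qed
    then show ?thesis using False by (intro disjI2 exI[of _ m]) auto
  qed
qed

end

theorem mainTheorem11:
  fixes n :: nat
    and smul :: "'k::field_char_0 \<Rightarrow> 'm::ab_group_add \<Rightarrow> 'm"
    and X D :: "nat \<Rightarrow> 'm \<Rightarrow> 'm"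
    and Md :: "int \<Rightarrow> 'm set"
  assumes "graded_weyl_module n smul X D Md"
    and "generalized_eulerian n smul X D Md"
    and "fin_gen_R n smul X"
  shows "(\<forall>v::'m. v = 0) \<or> (\<exists>m\<ge>1. free_deg0 n smul X Md m)"
proof -
  have g: "weyl_module n smul X D"
    "\<And>d. Modules.module.subspace smul (Md d)"
    "\<And>v. \<exists>!c :: int \<Rightarrow> 'm. finite {d. c d \<noteq> 0} \<and> (\<forall>d. c d \<in> Md d) \<and>
            v = (\<Sum>d\<in>{d. c d \<noteq> 0}. c d)"
    "\<And>i d v. i < n \<Longrightarrow> v \<in> Md d \<Longrightarrow> X i v \<in> Md (d + 1)"
    "\<And>i d v. i < n \<Longrightarrow> v \<in> Md d \<Longrightarrow> D i v \<in> Md (d - 1)"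
    using assms(1) unfolding graded_weyl_module_def by blast+
  have w: "Vector_Spaces.vector_space smul"
    "\<And>i. i < n \<Longrightarrow> Vector_Spaces.linear smul smul (X i)"
    "\<And>i. i < n \<Longrightarrow> Vector_Spaces.linear smul smul (D i)"
    "\<And>i j v. i < n \<Longrightarrow> j < n \<Longrightarrow> X i (X j v) = X j (X i v)"
    "\<And>i j v. i < n \<Longrightarrow> j < n \<Longrightarrow> D i (X j v) - X j (D i v) = (if i = j then v else 0)"
    using g(1) unfolding weyl_module_def by blast+
  have eu: "\<And>z d. z \<in> Md d \<Longrightarrow> \<exists>a::nat. ((\<lambda>v. (\<Sum>i<n. X i (D i v)) - smul (of_int d) v) ^^ a) z = 0"
    using assms(2) unfolding generalized_eulerian_def euler_op_def by blast
  have "GWF smul n X D Md"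
    unfolding GWF_def GWF_axioms_def GW_def GW_axioms_def
    by (intro conjI w(1) allI impI g(2) g(3) assms(3); (rule w(2-5) g(4-5) eu)?; assumption?)
  then interpret GWF smul n X D Md .
  show ?thesis using main by simp
qed


end
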